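(* Let $(M,L_M)$, $(N,L_N)$ be Lip-von Neumann algebras. Then the family $\mathcal L(M,N)$ is uniformly $w^*$-equicontinuous on the unit ball: for every $\varepsilon>0$ and every $x_0\in M_1$, $y_0\in N_1$ there is a neighbourhood $U$ of $(x_0,y_0)$ in $M_1\times N_1$ for the (product) $w^*$-topology such that $|L(x,-y)-L(x_0,-y_0)|<\varepsilon$ for all $(x,y)\in U$ and all $L\in\mathcal L(M,N)$.
   Context: A Lip-von Neumann algebra (LvNA) is a pair $(M,L_M)$ where $M$ is a von Neumann algebra and $L_M$ is a norm on $M$ (everywhere finite) inducing the $w^*$-topology on bounded subsets of $M$ (equivalently, the closed unit ball $M_1=\{x\in M:\|x\|\le 1\}$ is compact in the $L_M$-topology). For LvNAs $(M,L_M)$, $(N,L_N)$, $\mathcal L(M,N)$ is the set of seminorms $L$ on $M\oplus N$ with $L(x,0)=L_M(x)$ and $L(0,y)=L_N(y)$ for all $x\in M,y\in N$. *)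

theory Defs
  imports "HOL-Analysis.Analysis"
begin

text \<open>Abstract W*-algebras (Sakai): a unital C*-algebra which is (isometrically) the
dual Banach space of a Banach space of normal functionals (its predual).
The real Banach algebra structure comes from the type class; complex scalar
multiplication sc and the involution st are explicit parameters.\<close>

definition complex_struct :: "(complex \<Rightarrow> 'a::{real_normed_algebra,banach} \<Rightarrow> 'a) \<Rightarrow> bool" where
  "complex_struct sc \<longleftrightarrow>
     (\<forall>r x. sc (complex_of_real r) x = scaleR r x) \<and>
     (\<forall>a b x. sc (a + b) x = sc a x + sc b x) \<and>
     (\<forall>a x y. sc a (x + y) = sc a x + sc a y) \<and>
     (\<forall>a b x. sc a (sc b x) = sc (a * b) x) \<and>
     (\<forall>a x y. sc a (x * y) = sc a x * y \<and> sc a (x * y) = x * sc a y) \<and>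
     (\<forall>a x. norm (sc a x) = cmod a * norm x)"

definition C_star_algebra ::
  "(complex \<Rightarrow> 'a::{real_normed_algebra,banach} \<Rightarrow> 'a) \<Rightarrow> ('a \<Rightarrow> 'a) \<Rightarrow> bool" where
  "C_star_algebra sc st \<longleftrightarrow> complex_struct sc \<and>
     (\<forall>x y. st (x + y) = st x + st y) \<and>
     (\<forall>a x. st (sc a x) = sc (cnj a) (st x)) \<and>
     (\<forall>x. st (st x) = x) \<and>
     (\<forall>x y. st (x * y) = st y * st x) \<and>
     (\<forall>x. norm (st x * x) = (norm x)\<^sup>2)"

definition bounded_clinear_fun ::
  "(complex \<Rightarrow> 'a::{real_normed_algebra,banach} \<Rightarrow> 'a) \<Rightarrow> ('a \<Rightarrow> complex) \<Rightarrow> bool" where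
  "bounded_clinear_fun sc \<phi> \<longleftrightarrow> bounded_linear \<phi> \<and> (\<forall>c x. \<phi> (sc c x) = c * \<phi> x)"

text \<open>P is a predual of the C*-algebra: a norm-closed complex subspace of the
dual such that the canonical map x \<mapsto> (\<phi> \<mapsto> \<phi> x) is an isometric
isomorphism of the algebra onto the Banach dual of P.\<close>
definition is_predual ::
  "(complex \<Rightarrow> 'a::{real_normed_algebra,banach} \<Rightarrow> 'a) \<Rightarrow> ('a \<Rightarrow> complex) set \<Rightarrow> bool" where
  "is_predual sc P \<longleftrightarrow>
     (\<forall>\<phi>\<in>P. bounded_clinear_fun sc \<phi>) \<and>
     (\<lambda>x. 0) \<in> P \<and>
     (\<forall>\<phi>\<in>P. \<forall>\<psi>\<in>P. (\<lambda>x. \<phi> x + \<psi> x) \<in> P) \<and>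
     (\<forall>c. \<forall>\<phi>\<in>P. (\<lambda>x. c * \<phi> x) \<in> P) \<and>
     (\<forall>\<phi>. bounded_clinear_fun sc \<phi> \<and>
          (\<forall>e>0. \<exists>\<psi>\<in>P. onorm (\<lambda>x. \<phi> x - \<psi> x) < e) \<longrightarrow> \<phi> \<in> P) \<and>
     (\<forall>x. norm x = (SUP \<phi>\<in>{\<phi>\<in>P. onorm \<phi> \<le> 1}. cmod (\<phi> x))) \<and>
     (\<forall>f :: ('a \<Rightarrow> complex) \<Rightarrow> complex.
        (\<forall>\<phi>\<in>P. \<forall>\<psi>\<in>P. f (\<lambda>x. \<phi> x + \<psi> x) = f \<phi> + f \<psi>) \<and>
        (\<forall>c. \<forall>\<phi>\<in>P. f (\<lambda>x. c * \<phi> x) = c * f \<phi>) \<and>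
        (\<exists>K. \<forall>\<phi>\<in>P. cmod (f \<phi>) \<le> K * onorm \<phi>)
        \<longrightarrow> (\<exists>x. \<forall>\<phi>\<in>P. f \<phi> = \<phi> x))"

definition von_neumann_algebra ::
  "(complex \<Rightarrow> 'a::{real_normed_algebra,banach} \<Rightarrow> 'a) \<Rightarrow> ('a \<Rightarrow> 'a) \<Rightarrow> ('a \<Rightarrow> complex) set \<Rightarrow> bool" where
  "von_neumann_algebra sc st P \<longleftrightarrow> C_star_algebra sc st \<and>
     (\<exists>e. \<forall>x. e * x = x \<and> x * e = (x::'a)) \<and> is_predual sc P"

definition wstar_topology :: "('a \<Rightarrow> complex) set \<Rightarrow> 'a topology" where
  "wstar_topology P = topology_generated_by {{x. \<phi> x \<in> U} | \<phi> U. \<phi> \<in> P \<and> open U}"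

definition is_cnorm :: "(complex \<Rightarrow> 'a::{real_normed_algebra,banach} \<Rightarrow> 'a) \<Rightarrow> ('a \<Rightarrow> real) \<Rightarrow> bool" where
  "is_cnorm sc L \<longleftrightarrow> (\<forall>x y. L (x + y) \<le> L x + L y) \<and>
     (\<forall>c x. L (sc c x) = cmod c * L x) \<and> (\<forall>x. L x = 0 \<longrightarrow> x = 0)"

definition norm_topology :: "('a::ab_group_add \<Rightarrow> real) \<Rightarrow> 'a topology" where
  "norm_topology L = topology (\<lambda>U. \<forall>x\<in>U. \<exists>e>0. \<forall>y. L (y - x) < e \<longrightarrow> y \<in> U)"

definition unit_ball :: "'a::real_normed_vector set" where
  "unit_ball = {x. norm x \<le> 1}"

definition Lip_vN_algebra ::
  "(complex \<Rightarrow> 'a::{real_normed_algebra,banach} \<Rightarrow> 'a) \<Rightarrow> ('a \<Rightarrow> 'a) \<Rightarrow> ('a \<Rightarrow> complex) set \<Rightarrow> ('a \<Rightarrow> real) \<Rightarrow> bool" where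
  "Lip_vN_algebra sc st P L \<longleftrightarrow> von_neumann_algebra sc st P \<and> is_cnorm sc L \<and>
     (\<forall>B. (\<exists>r. \<forall>x\<in>B. norm x \<le> r) \<longrightarrow>
          subtopology (wstar_topology P) B = subtopology (norm_topology L) B)"

definition Lfam ::
  "(complex \<Rightarrow> 'a::{real_normed_algebra,banach} \<Rightarrow> 'a) \<Rightarrow> (complex \<Rightarrow> 'b::{real_normed_algebra,banach} \<Rightarrow> 'b)
   \<Rightarrow> ('a \<Rightarrow> real) \<Rightarrow> ('b \<Rightarrow> real) \<Rightarrow> ('a \<times> 'b \<Rightarrow> real) set" where
  "Lfam scM scN LM LN = {L.
     (\<forall>z w. L (z + w) \<le> L z + L w) \<and>
     (\<forall>c x y. L (scM c x, scN c y) = cmod c * L (x, y)) \<and>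
     (\<forall>x. L (x, 0) = LM x) \<and> (\<forall>y. L (0, y) = LN y)}"

end

theory Submission
  imports Defs
begin

lemma istop_norm: "istopology (\<lambda>U. \<forall>x\<in>U. \<exists>e>0. \<forall>y. (L::'a::ab_group_add\<Rightarrow>real) (y - x) < e \<longrightarrow> y \<in> U)"
  unfolding istopology_def
proof (intro conjI allI impI)
  fix S T assume S: "\<forall>x\<in>S. \<exists>e>0. \<forall>y. L (y - x) < e \<longrightarrow> y \<in> S"
    and T: "\<forall>x\<in>T. \<exists>e>0. \<forall>y. L (y - x) < e \<longrightarrow> y \<in> T"
  show "\<forall>x\<in>S \<inter> T. \<exists>e>0. \<forall>y. L (y - x) < e \<longrightarrow> y \<in> S \<inter> T"
  proof
    fix x assume "x \<in> S \<inter> T"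
    then obtain e1 e2 where "e1>0" "e2>0" "\<forall>y. L (y - x) < e1 \<longrightarrow> y \<in> S" "\<forall>y. L (y - x) < e2 \<longrightarrow> y \<in> T"
      using S T by blast
    note h = this
    show "\<exists>e>0. \<forall>y. L (y - x) < e \<longrightarrow> y \<in> S \<inter> T"
    proof (intro exI[of _ "min e1 e2"] conjI allI impI)
      show "0 < min e1 e2" using h(1,2) by simp
      fix y assume "L (y - x) < min e1 e2"
      then have "L (y - x) < e1" "L (y - x) < e2" by simp_all
      then show "y \<in> S \<inter> T" using h(3,4) by blast
    qed
  qed
next
  fix K assume K: "\<forall>S\<in>K. \<forall>x\<in>S. \<exists>e>0. \<forall>y. L (y - x) < e \<longrightarrow> y \<in> S"
  show "\<forall>x\<in>\<Union>K. \<exists>e>0. \<forall>y. L (y - x) < e \<longrightarrow> y \<in> \<Union>K"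
  proof
    fix x assume "x \<in> \<Union>K"
    then obtain S where S: "S \<in> K" "x \<in> S" by blast
    then obtain e where "e > 0" "\<forall>y. L (y - x) < e \<longrightarrow> y \<in> S" using K by blast
    then show "\<exists>e>0. \<forall>y. L (y - x) < e \<longrightarrow> y \<in> \<Union>K" using S(1) by blast
  qed
qed

lemma cs_neg:
  assumes "complex_struct sc" shows "sc (-1) x = - x"
proof -
  have "sc (complex_of_real (-1)) x = scaleR (-1) x" using assms unfolding complex_struct_def by blast
  then show ?thesis by simp
qed

lemma lip_cs: "Lip_vN_algebra sc st P L \<Longrightarrow> complex_struct sc"
  unfolding Lip_vN_algebra_def von_neumann_algebra_def C_star_algebra_def by blast

lemma lip_neg: assumes "Lip_vN_algebra sc st P L" shows "L (- x) = L x"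
proof -
  have c: "is_cnorm sc L" using assms unfolding Lip_vN_algebra_def by blast
  have "L (sc (-1) x) = cmod (-1) * L x" using c unfolding is_cnorm_def by blast
  then show ?thesis using cs_neg[OF lip_cs[OF assms]] by simp
qed

lemma lip_zero: assumes "Lip_vN_algebra sc st P L" shows "L 0 = 0"
proof -
  have c: "is_cnorm sc L" using assms unfolding Lip_vN_algebra_def by blast
  have "L (sc 0 0) = cmod 0 * L 0" using c unfolding is_cnorm_def by blast
  moreover have "sc (complex_of_real 0) 0 = scaleR 0 0"
    using lip_cs[OF assms] unfolding complex_struct_def by blast
  ultimately show ?thesis by simp
qed

lemma ball_open:
  assumes A: "Lip_vN_algebra sc st P L" and r: "r > 0"
  shows "openin (subtopology (wstar_topology P) unit_ball) {x\<in>unit_ball. L (x - x0) < r}"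
proof -
  have c: "is_cnorm sc L" using A unfolding Lip_vN_algebra_def by blast
  have eq: "subtopology (wstar_topology P) unit_ball = subtopology (norm_topology L) unit_ball"
  proof -
    have h: "\<forall>B. (\<exists>r. \<forall>x\<in>B. norm x \<le> r) \<longrightarrow>
          subtopology (wstar_topology P) B = subtopology (norm_topology L) B"
      using A unfolding Lip_vN_algebra_def by blast
    have "\<exists>r. \<forall>x\<in>(unit_ball::'a set). norm x \<le> r" by (rule exI[of _ 1]) (simp add: unit_ball_def)
    then show ?thesis using h by blast
  qed
  have "openin (norm_topology L) {x. L (x - x0) < r}"
    unfolding norm_topology_def topology_inverse'[OF istop_norm]
  proof
    fix x assume "x \<in> {x. L (x - x0) < r}"
    then have x: "L (x - x0) < r" by simp
    show "\<exists>e>0. \<forall>y. L (y - x) < e \<longrightarrow> y \<in> {x. L (x - x0) < r}"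
    proof (intro exI[of _ "r - L (x - x0)"] conjI allI impI)
      fix y assume "L (y - x) < r - L (x - x0)"
      moreover have "L (y - x0) \<le> L (y - x) + L (x - x0)"
      proof -
        have "L (y - x0) = L ((y - x) + (x - x0))" by simp
        also have "\<dots> \<le> L (y - x) + L (x - x0)" using c unfolding is_cnorm_def by blast
        finally show ?thesis .
      qed
      ultimately show "y \<in> {x. L (x - x0) < r}" by simp
    qed (use x in simp)
  qed
  then show ?thesis unfolding eq openin_subtopology by blast
qed

theorem mainTheorem6:
  fixes scM :: "complex \<Rightarrow> 'a::{real_normed_algebra,banach} \<Rightarrow> 'a"
    and scN :: "complex \<Rightarrow> 'b::{real_normed_algebra,banach} \<Rightarrow> 'b"
  assumes "Lip_vN_algebra scM stM PM LM"
    and "Lip_vN_algebra scN stN PN LN"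
  shows "\<forall>\<epsilon>>0. \<forall>x0\<in>unit_ball. \<forall>y0\<in>unit_ball.
           \<exists>U. openin (prod_topology (subtopology (wstar_topology PM) unit_ball)
                                    (subtopology (wstar_topology PN) unit_ball)) U
               \<and> (x0, y0) \<in> U
               \<and> (\<forall>(x, y)\<in>U. \<forall>L\<in>Lfam scM scN LM LN.
                     \<bar>L (x, - y) - L (x0, - y0)\<bar> < \<epsilon>)"
proof (intro allI impI ballI)
  fix \<epsilon> :: real and x0 :: 'a and y0 :: 'b
  assume e: "\<epsilon> > 0" and x0: "x0 \<in> unit_ball" and y0: "y0 \<in> unit_ball"
  define A where "A = {x\<in>unit_ball. LM (x - x0) < \<epsilon>/2}"
  define B where "B = {y\<in>unit_ball. LN (y - y0) < \<epsilon>/2}"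
  have cM: "is_cnorm scM LM" using assms(1) unfolding Lip_vN_algebra_def by blast
  have cN: "is_cnorm scN LN" using assms(2) unfolding Lip_vN_algebra_def by blast
  have zM: "LM 0 = 0" by (rule lip_zero[OF assms(1)])
  have zN: "LN 0 = 0" by (rule lip_zero[OF assms(2)])
  have tM: "\<And>u v. LM (u + v) \<le> LM u + LM v" using cM unfolding is_cnorm_def by blast
  have tN: "\<And>u v. LN (u + v) \<le> LN u + LN v" using cN unfolding is_cnorm_def by blast
  show "\<exists>U. openin (prod_topology (subtopology (wstar_topology PM) unit_ball)
                                    (subtopology (wstar_topology PN) unit_ball)) U
               \<and> (x0, y0) \<in> U
               \<and> (\<forall>(x, y)\<in>U. \<forall>L\<in>Lfam scM scN LM LN.
                     \<bar>L (x, - y) - L (x0, - y0)\<bar> < \<epsilon>)"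
  proof (intro exI[of _ "A \<times> B"] conjI)
    show "openin (prod_topology (subtopology (wstar_topology PM) unit_ball)
                                    (subtopology (wstar_topology PN) unit_ball)) (A \<times> B)"
      unfolding openin_prod_Times_iff A_def B_def
      using ball_open[OF assms(1), of "\<epsilon>/2" x0] ball_open[OF assms(2), of "\<epsilon>/2" y0] e
      by (intro disjI2 conjI) auto
    show "(x0, y0) \<in> A \<times> B" using x0 y0 e zM zN unfolding A_def B_def by simp
    show "\<forall>(x, y)\<in>A \<times> B. \<forall>L\<in>Lfam scM scN LM LN. \<bar>L (x, - y) - L (x0, - y0)\<bar> < \<epsilon>"
    proof (clarify)
      fix x y L assume xA: "x \<in> A" and yB: "y \<in> B" and L: "L \<in> Lfam scM scN LM LN"
      have hx: "LM (x - x0) < \<epsilon>/2" using xA unfolding A_def by simp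
      have hy: "LN (y - y0) < \<epsilon>/2" using yB unfolding B_def by simp
      have tri: "\<And>z w. L (z + w) \<le> L z + L w" and l1: "\<And>u. L (u, 0) = LM u" and l2: "\<And>v. L (0, v) = LN v"
        using L unfolding Lfam_def by auto
      have split: "\<And>u v. L (u, v) \<le> LM u + LN v"
      proof -
        fix u v
        have "L (u, v) = L ((u, 0) + (0, v))" by simp
        also have "\<dots> \<le> L (u,0) + L (0,v)" by (rule tri)
        finally show "L (u, v) \<le> LM u + LN v" using l1 l2 by simp
      qed
      have "L (x, - y) = L ((x0, - y0) + (x - x0, - (y - y0)))" by simp
      also have "\<dots> \<le> L (x0, - y0) + L (x - x0, - (y - y0))" by (rule tri)
      finally have a0: "L (x, - y) \<le> L (x0, - y0) + L (x - x0, - (y - y0))" .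
      have a: "L (x, - y) \<le> L (x0, - y0) + LM (x - x0) + LN (y - y0)"
        using a0 split[of "x - x0" "- (y - y0)"] lip_neg[OF assms(2), of "y - y0"] by linarith
      have "L (x0, - y0) = L ((x, - y) + (- (x - x0), y - y0))" by simp
      also have "\<dots> \<le> L (x, - y) + L (- (x - x0), y - y0)" by (rule tri)
      finally have b0: "L (x0, - y0) \<le> L (x, - y) + L (- (x - x0), y - y0)" .
      have b: "L (x0, - y0) \<le> L (x, - y) + LM (x - x0) + LN (y - y0)"
        using b0 split[of "- (x - x0)" "y - y0"] lip_neg[OF assms(1), of "x - x0"] by linarith
      show "\<bar>L (x, - y) - L (x0, - y0)\<bar> < \<epsilon>" using a b hx hy by linarith
    qed
  qed
qed

end
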